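(* For every real $n$ with $$1<n<\frac{\sqrt{(1+\sqrt2)/2}+1}{\sqrt{(1+\sqrt2)/2}-1}=21.2666866\ldots,$$ we have $$\sum_{k=0}^\infty\frac{(2(n^2+6n+1)^2(n^2-10n+1)k+P(n))(n-1)^{4k}}{(-n)^k(n+1)^{2k}\binom{4k}{2k}}=6n(n+1)(n-1)^3\log n-32n(n+1)^2(n^2-4n+1),$$ where $P(n)=n^6-58n^5+159n^4+52n^3+159n^2-58n+1$. In particular, \begin{align*} \sum_{k=0}^\infty\frac{2890k-563}{(-18)^k\binom{4k}{2k}}&=-12(\log2+48),\\ \sum_{k=0}^\infty\frac{245k-17}{(-3)^k\binom{4k}{2k}}&=-24-\frac92\log3,\\ \sum_{k=0}^\infty\frac{(77326k+8951)81^k}{(-100)^k\binom{4k}{2k}}&=40(80-81\log4),\\ \sum_{k=0}^\infty\frac{(196k+73)64^k}{(-45)^k\binom{4k}{2k}}&=15(3-\log5),\\ \sum_{k=0}^\infty\frac{(245134k+181679)625^k}{(-294)^k\binom{4k}{2k}}&=84(1456-375\log6),\\ \sum_{k=0}^\infty\frac{(2645k+3517)81^k}{(-28)^k\binom{4k}{2k}}&=7(352-81\log7),\\ \sum_{k=0}^\infty\frac{(127890k+316933)2401^k}{(-648)^k\binom{4k}{2k}}&=144(1584-343\log8),\\ \sum_{k=0}^\infty\frac{(1156k+7031)1024^k}{(-225)^k\binom{4k}{2k}}&=45(115-24\log9),\\ \sum_{k=0}^\infty\frac{(51842k-3142679)6561^k}{(-1210)^k\binom{4k}{2k}}&=220(2187\log10-10736),\\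 \sum_{k=0}^\infty\frac{(2209k-13421)625^k}{(-99)^k\binom{4k}{2k}}&=\frac{99}2(125\log11-624),\\ \sum_{k=0}^\infty\frac{(2354450k-8037191)14641^k}{(-2028)^k\binom{4k}{2k}}&=312(3993\log12-20176),\\ \sum_{k=0}^\infty\frac{(19220k-46979)5184^k}{(-637)^k\binom{4k}{2k}}&=91(81\log13-413),\\ \sum_{k=0}^\infty\frac{(3000515k-5794357)28561^k}{(-3150)^k\binom{4k}{2k}}&=420(2197\log14-11280),\\ \sum_{k=0}^\infty\frac{(118579k-190573)2401^k}{(-240)^k\binom{4k}{2k}}&=30(1029\log15-5312),\\ \sum_{k=0}^\infty\frac{(24174146k-33367199)50625^k}{(-4624)^k\binom{4k}{2k}}&=544(10125\log16-52496),\\ \sum_{k=0}^\infty\frac{(48020k-58117)16384^k}{(-1377)^k\binom{4k}{2k}}&=459(64\log17-333),\\ \sum_{k=0}^\infty\frac{(54371810k-58537799)83521^k}{(-6498)^k\binom{4k}{2k}}&=684(14739\log18-76912),\\ \sum_{k=0}^\infty\frac{(608923k-589327)6561^k}{(-475)^k\binom{4k}{2k}}&=\frac{95}2(2187\log19-11440),\\ \sum_{k=0}^\infty\frac{(36377094k-31893853)130321^k}{(-8820)^k\binom{4k}{2k}}&=840(6859\log20-35952),\\ \sum_{k=0}^\infty\frac{(584756k-467339)40000^k}{(-2541)^k\binom{4k}{2k}}&=231(375\log21-1969),\\ \sum_{k=0}^\infty\frac{(661704134402k-517115569199)43046721^k}{(-2693140)^k\binom{4k}{2k}}&=60520\left(1594323\log\frac{85}4-8374544\right).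 \end{align*}
   Context: $\log$ is the natural logarithm. *)

theory Defs
  imports "HOL-Analysis.Analysis"
begin

end

theory Submission
  imports Defs
begin



lemma aux1: "(w::real) \<noteq> 0 \<Longrightarrow> (0 * w^2 - 1 * (real 2 * ((0 - 1) * w ^ (2 - Suc 0)))) / (w^2 * w^2) = 2/w^3" by (simp add: field_simps eval_nat_numeral)

lemma geo2_sums:
  fixes z :: real assumes "norm z < 1"
  shows "(\<lambda>k. (real k + 1) * (real k + 2) * z ^ k) sums (2 / (1 - z)^3)"
proof -
  have "(\<lambda>k. diffs (\<lambda>k. real (Suc k)) k * z ^ k) sums (2 / (1 - z)^3)"
  proof (rule termdiffs_sums_strong[where K=1])
    fix z :: real assume "norm z < 1"
    thus "(\<lambda>k. real (Suc k) * z ^ k) sums (1 / (1 - z)^2)"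
      using geometric_deriv_sums[of z] by simp
  next
    have "z \<noteq> 1" using assms by auto
    hence nz: "1 - z \<noteq> 0" by simp
    show "((\<lambda>z. 1 / (1 - z)^2) has_field_derivative (2 / (1 - z)^3)) (at z)"
      apply (rule derivative_eq_intros refl)+
      using nz apply simp
      using nz by (rule aux1)
  qed (use assms in auto)
  thus ?thesis by (simp add: diffs_def algebra_simps)
qed

lemma poly_geo_sums:
  fixes z a b :: real assumes "norm z < 1"
  shows "(\<lambda>k. (a * real k + b) * (4 * real k + 1) * z ^ k) sums
     (8*a/(1-z)^3 + (4*b-11*a)/(1-z)^2 + (3*a-3*b)/(1-z))"
proof -
  have s1: "(\<lambda>k. (4*a) * ((real k + 1) * (real k + 2) * z ^ k)) sums ((4*a) * (2 / (1 - z)^3))"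
    by (intro sums_mult geo2_sums assms)
  have s2: "(\<lambda>k. (4*b-11*a) * (real (Suc k) * z ^ k)) sums ((4*b-11*a) * (1 / (1 - z)^2))"
    by (intro sums_mult geometric_deriv_sums assms)
  have s3: "(\<lambda>k. (3*a-3*b) * z ^ k) sums ((3*a-3*b) * (1 / (1 - z)))"
    by (intro sums_mult geometric_sums) (use assms in auto)
  have s: "(\<lambda>k. (4*a) * ((real k + 1) * (real k + 2) * z ^ k) + (4*b-11*a) * (real (Suc k) * z ^ k)
      + (3*a-3*b) * z ^ k) sums ((4*a) * (2 / (1 - z)^3) + (4*b-11*a) * (1 / (1 - z)^2) + (3*a-3*b) * (1 / (1 - z)))"
    by (intro sums_add s1 s2 s3)
  have eqf: "\<And>k. (4*a) * ((real k + 1) * (real k + 2) * z ^ k) + (4*b-11*a) * (real (Suc k) * z ^ k)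
      + (3*a-3*b) * z ^ k = (a * real k + b) * (4 * real k + 1) * z ^ k"
    by (simp add: algebra_simps)
  have eqv: "(4*a) * (2 / (1 - z)^3) + (4*b-11*a) * (1 / (1 - z)^2) + (3*a-3*b) * (1 / (1 - z))
     = 8*a/(1-z)^3 + (4*b-11*a)/(1-z)^2 + (3*a-3*b)/(1-z)" by simp
  show ?thesis using s unfolding eqf eqv .
qed


lemma aux2:
  fixes w x :: real
  assumes "w = 1 - x^2"
  shows "1 * w^(Suc j) + real (Suc j) * ((0 - real 2 * (1 * x ^ (2 - Suc 0))) * w^(Suc j - Suc 0)) * x
     = (2*real j+3)*w^(Suc j) - (2*real j+2)*w^j"
proof -
  have "1 * w^(Suc j) + real (Suc j) * ((0 - real 2 * (1 * x ^ (2 - Suc 0))) * w^(Suc j - Suc 0)) * x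
      = w^(Suc j) - 2*real(Suc j)*x^2*w^j" by (simp add: power2_eq_square algebra_simps)
  also have "\<dots> = w^(Suc j) - 2*real(Suc j)*(1-w)*w^j" using assms by simp
  also have "\<dots> = (2*real j+3)*w^(Suc j) - (2*real j+2)*w^j" by (simp add: algebra_simps)
  finally show ?thesis .
qed

lemma beta_aux_deriv:
  fixes x :: real
  shows "((\<lambda>s. s*(1-s^2)^(Suc j)) has_real_derivative
          ((2*real j+3)*(1-x^2)^(Suc j) - (2*real j+2)*(1-x^2)^j)) (at x)"
  apply (rule derivative_eq_intros refl)+
  apply (rule aux2)
  apply simp
  done

lemma beta_int:
  "((\<lambda>s::real. (1-s^2)^m) has_integral (4^m * fact m ^2 / fact (2*m+1))) {0..1}"
proof (induction m)
  case 0
  then show ?case using has_integral_const_real[of "1::real" 0 1] by simp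
next
  case (Suc j)
  have G: "((\<lambda>x. (2*real j+3)*(1-x^2)^(Suc j) - (2*real j+2)*(1-x^2)^j) has_integral
        ((\<lambda>s. s*(1-s^2)^(Suc j)) 1 - (\<lambda>s. s*(1-s^2)^(Suc j)) 0)) {0..1}"
    apply (rule fundamental_theorem_of_calculus)
     apply simp
    apply (rule has_vector_derivative_at_within)
    apply (subst has_real_derivative_iff_has_vector_derivative[symmetric])
    apply (rule beta_aux_deriv)
    done
  have H: "((\<lambda>x. ((2*real j+3)*(1-x^2)^(Suc j) - (2*real j+2)*(1-x^2)^j) + (2*real j+2)*(1-x^2)^j)
      has_integral (0 + (2*real j+2) * (4^j * fact j ^2 / fact (2*j+1)))) {0..1}"
    using has_integral_add[OF G[simplified] has_integral_cmul[OF Suc.IH, of "2*real j+2"]] by simp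
  have H2: "((\<lambda>x. (1/(2*real j+3)) * (((2*real j+3)*(1-x^2)^(Suc j) - (2*real j+2)*(1-x^2)^j) + (2*real j+2)*(1-x^2)^j))
      has_integral ((1/(2*real j+3)) * (0 + (2*real j+2) * (4^j * fact j ^2 / fact (2*j+1))))) {0..1}"
    by (rule has_integral_mult_right[OF H])
  have e1: "\<And>x::real. (1/(2*real j+3)) * (((2*real j+3)*(1-x^2)^(Suc j) - (2*real j+2)*(1-x^2)^j) + (2*real j+2)*(1-x^2)^j)
       = (1-x^2)^(Suc j)"
    by (simp add: field_simps)
  have e2: "(1/(2*real j+3)) * (0 + (2*real j+2) * (4^j * fact j ^2 / fact (2*j+1)))
     = 4^(Suc j) * fact (Suc j) ^2 / fact (2*(Suc j)+1)"
  proof -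
    have f1: "(fact (2*Suc j+1) :: real) = (2*real j+3)*(2*real j+2)*fact (2*j+1)"
      by (simp add: algebra_simps fact_Suc numeral_eq_Suc)
    have f2: "(fact (Suc j) :: real) = (real j+1) * fact j" by (simp add: algebra_simps)
    have g: "\<forall>F::real. F > 0 \<longrightarrow> (1/(2*real j+3)) * (0 + (2*real j+2) * (4^j * fact j ^2 / F))
       = 4^(Suc j) * ((real j+1) * fact j)^2 / ((2*real j+3)*(2*real j+2)*F)"
    proof (intro allI impI)
      fix F :: real assume F: "F > 0"
      have a: "real j \<ge> 0" by simp
      have l: "(1/(2*real j+3)) * (0 + (2*real j+2) * (4^j * fact j ^2 / F)) = ((2*real j+2) * (4^j * fact j ^2)) / ((2*real j+3)*F)"
        by simp
      have "((2*real j+2) * (4^j * fact j ^2)) / ((2*real j+3)*F) = 4^(Suc j) * ((real j+1) * fact j)^2 / ((2*real j+3)*(2*real j+2)*F)"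
        apply (subst frac_eq_eq)
        using F a apply simp
        using F a apply simp
        by (simp add: algebra_simps power2_eq_square)
      with l show "(1/(2*real j+3)) * (0 + (2*real j+2) * (4^j * fact j ^2 / F))
       = 4^(Suc j) * ((real j+1) * fact j)^2 / ((2*real j+3)*(2*real j+2)*F)" by simp
    qed
    show ?thesis unfolding f1 f2 using g fact_gt_zero by (metis (no_types, lifting))
  qed
  show ?case using H2 unfolding e1 e2 .
qed


definition cA :: "real \<Rightarrow> real" where "cA n = 2*(n^2+6*n+1)^2*(n^2-10*n+1)"
definition cB :: "real \<Rightarrow> real" where "cB n = n^6-58*n^5+159*n^4+52*n^3+159*n^2-58*n+1"
definition cW :: "real \<Rightarrow> real" where "cW n = n*(n+1)^2"
definition cQ :: "real \<Rightarrow> real \<Rightarrow> real" where "cQ n s = 16*cW n + (n-1)^4*(1-s^2)^2"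
definition cQd :: "real \<Rightarrow> real \<Rightarrow> real" where "cQd n s = - (4* s*(n-1)^4*(1-s^2))"
definition c0 :: "real \<Rightarrow> real" where
  "c0 n = 3 - 174*n + 839*n^2 - 3240*n^3 + 8118*n^4 + 21676*n^5 + 8118*n^6 - 3240*n^7 + 839*n^8 - 174*n^9 + 3*n^10"
definition c1 :: "real \<Rightarrow> real" where
  "c1 n = - ((n-1)^4*(9 - 326*n + 1927*n^2 + 3948*n^3 + 1927*n^4 - 326*n^5 + 9*n^6))"
definition c2 :: "real \<Rightarrow> real" where
  "c2 n = (n-1)^4*(9 - 182*n + 775*n^2 + 1356*n^3 + 775*n^4 - 182*n^5 + 9*n^6)"
definition c3 :: "real \<Rightarrow> real" where "c3 n = - (3*(n-1)^10)"
definition cN :: "real \<Rightarrow> real \<Rightarrow> real" where "cN n s = c0 n + c1 n* s^2 + c2 n* s^4 + c3 n* s^6"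
definition cNd :: "real \<Rightarrow> real \<Rightarrow> real" where "cNd n s = c0 n + 3*c1 n* s^2 + 5*c2 n* s^4 + 7*c3 n* s^6"
definition cqp :: "real \<Rightarrow> real \<Rightarrow> real" where "cqp n s = (n-1)^2* s^2 + 2*(n^2-1)* s + (n^2+6*n+1)"
definition cqm :: "real \<Rightarrow> real \<Rightarrow> real" where "cqm n s = (n-1)^2* s^2 - 2*(n^2-1)* s + (n^2+6*n+1)"
definition cqpd :: "real \<Rightarrow> real \<Rightarrow> real" where "cqpd n s = 2*(n-1)^2* s + 2*(n^2-1)"
definition cqmd :: "real \<Rightarrow> real \<Rightarrow> real" where "cqmd n s = 2*(n-1)^2* s - 2*(n^2-1)"
definition cG :: "real \<Rightarrow> real \<Rightarrow> real" where "cG n s = s * cN n s"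
definition FF :: "real \<Rightarrow> real \<Rightarrow> real" where
  "FF n s = 8*cW n*cG n s/(cQ n s)^2 + 6*n*(n+1)*(n-1)^3*(ln (cqp n s) - ln (cqm n s))"
definition cy :: "real \<Rightarrow> real" where "cy n = (n-1)^4/((-n)*(n+1)^2)"
definition cz :: "real \<Rightarrow> real \<Rightarrow> real" where "cz n s = cy n*((1-s^2)/4)^2"
definition cR :: "real \<Rightarrow> real \<Rightarrow> real \<Rightarrow> real" where
  "cR a b z = 8*a/(1-z)^3 + (4*b-11*a)/(1-z)^2 + (3*a-3*b)/(1-z)"

lemma polyid:
  "2*(8*cA n*256*cW n^2 + (4*cB n-11*cA n)*16*cW n*cQ n s + 3*(cA n-cB n)*cQ n s^2)
   = cNd n s*cQ n s - 2*cG n s*cQd n s + 3*(n-1)^4*(n^2+6*n+1-(n-1)^2* s^2)*cQ n s^2"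
  unfolding cA_def cB_def cW_def cQ_def cQd_def cG_def cN_def cNd_def c0_def c1_def c2_def c3_def
  by algebra

lemma qpqm: "cqp n s * cqm n s = cQ n s"
  unfolding cqp_def cqm_def cQ_def cW_def by algebra

lemma qlog: "cqpd n s * cqm n s - cqmd n s * cqp n s = 4*(n^2-1)*(n^2+6*n+1-(n-1)^2* s^2)"
  unfolding cqp_def cqm_def cqpd_def cqmd_def by algebra

lemma cqp_pos: "n > 0 \<Longrightarrow> cqp n s > 0"
proof -
  assume n: "n > 0"
  have "cqp n s = ((n-1)* s+(n+1))^2 + 4*n" unfolding cqp_def by algebra
  thus ?thesis using n by (simp add: add_nonneg_pos)
qed

lemma cqm_pos: "n > 0 \<Longrightarrow> cqm n s > 0"
proof -
  assume n: "n > 0"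
  have "cqm n s = ((n-1)* s-(n+1))^2 + 4*n" unfolding cqm_def by algebra
  thus ?thesis using n by (simp add: add_nonneg_pos)
qed

lemma cQ_pos: "n > 0 \<Longrightarrow> cQ n s > 0"
  using qpqm[of n s] cqp_pos[of n s] cqm_pos[of n s] by (metis mult_pos_pos)

lemma cW_pos: "n > 0 \<Longrightarrow> cW n > 0" unfolding cW_def by simp

lemma d_cQ [derivative_intros]: "((\<lambda>s. cQ n s) has_real_derivative cQd n x) (at x within S)"
  unfolding cQ_def cQd_def
  apply (rule derivative_eq_intros refl)+
  by (simp add: algebra_simps power2_eq_square)

lemma d_sN [derivative_intros]: "((\<lambda>s. cG n s) has_real_derivative cNd n x) (at x within S)"
  unfolding cG_def cN_def cNd_def
  apply (rule derivative_eq_intros refl)+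
  by (simp add: algebra_simps eval_nat_numeral)

lemma d_qp [derivative_intros]: "((\<lambda>s. cqp n s) has_real_derivative cqpd n x) (at x within S)"
  unfolding cqp_def cqpd_def
  apply (rule derivative_eq_intros refl)+
  by (simp add: algebra_simps power2_eq_square)

lemma d_qm [derivative_intros]: "((\<lambda>s. cqm n s) has_real_derivative cqmd n x) (at x within S)"
  unfolding cqm_def cqmd_def
  apply (rule derivative_eq_intros refl)+
  by (simp add: algebra_simps power2_eq_square)


lemma aux3: "(p::real) > 0 \<Longrightarrow> a/(-p) * (b/4)^2 = -(a*b^2)/(16*p)"
  by (simp add: field_simps power_divide)

lemma one_minus_cz: assumes n: "n > 0" shows "1 - cz n s = cQ n s / (16*cW n)"
proof -
  have e: "(-n)*(n+1)^2 = - cW n" unfolding cW_def by simp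
  have "cz n s = -((n-1)^4*(1-s^2)^2)/(16*cW n)"
    unfolding cz_def cy_def e using aux3[OF cW_pos[OF n]] by simp
  thus ?thesis using cW_pos[OF n] unfolding cQ_def by (simp add: field_simps)
qed

lemma final_alg:
  fixes A B W Q qp qm qpd qmd Nd G Qd E z n :: real
  assumes Q: "Q = qp*qm" and qp: "qp \<noteq> 0" and qm: "qm \<noteq> 0" and W: "W \<noteq> 0"
    and z: "1 - z = Q/(16*W)"
    and P: "2*(8*A*256*W^2 + (4*B-11*A)*16*W*Q + 3*(A-B)*Q^2) = Nd*Q - 2*G*Qd + 3*(n-1)^4*E*Q^2"
    and L: "qpd*qm - qmd*qp = 4*(n^2-1)*E" and Wd: "W = n*(n+1)^2"
  shows "8*W*(Nd*Q - 2*G*Qd)/Q^3 + 6*n*(n+1)*(n-1)^3*(qpd/qp - qmd/qm)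
       = 8*A/(1-z)^3 + (4*B-11*A)/(1-z)^2 + (3*A-3*B)/(1-z)"
proof -
  have Qn: "Q \<noteq> 0" using Q qp qm by simp
  have r: "8*A/(1-z)^3 + (4*B-11*A)/(1-z)^2 + (3*A-3*B)/(1-z)
     = 8*W*(2*(8*A*256*W^2 + (4*B-11*A)*16*W*Q + 3*(A-B)*Q^2))/Q^3"
    unfolding z using Qn W by (simp add: field_simps eval_nat_numeral)
  have l1: "qpd/qp - qmd/qm = (qpd*qm - qmd*qp)/Q" unfolding Q using qp qm by (simp add: field_simps)
  have l2: "6*n*(n+1)*(n-1)^3*(qpd/qp - qmd/qm) = 24*W*(n-1)^4*E/Q"
    unfolding l1 L Wd by (simp add: field_simps eval_nat_numeral)
  have l3: "8*W*(Nd*Q - 2*G*Qd)/Q^3 + 24*W*(n-1)^4*E/Q = 8*W*(Nd*Q - 2*G*Qd + 3*(n-1)^4*E*Q^2)/Q^3"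
    using Qn by (simp add: field_simps eval_nat_numeral)
  show ?thesis unfolding r l2 l3 P ..
qed

lemma FF_deriv: assumes n: "n > 0"
  shows "((\<lambda>s. FF n s) has_real_derivative cR (cA n) (cB n) (cz n x)) (at x within S)"
proof -
  have d1: "((\<lambda>s. 8*cW n*cG n s/(cQ n s)^2) has_real_derivative
      8*cW n*(cNd n x*cQ n x - 2*cG n x*cQd n x)/cQ n x^3) (at x within S)"
    apply (rule derivative_eq_intros refl d_sN d_cQ)+
    using cQ_pos[OF n, of x] apply simp
    using cQ_pos[OF n, of x] by (simp add: field_simps eval_nat_numeral)
  have d2: "((\<lambda>s. ln (cqp n s)) has_real_derivative cqpd n x / cqp n x) (at x within S)"
    apply (rule derivative_eq_intros refl d_qp)+
    using cqp_pos[OF n, of x] d_qp[of n x S] by (auto simp: field_simps)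
  have d3: "((\<lambda>s. ln (cqm n s)) has_real_derivative cqmd n x / cqm n x) (at x within S)"
    apply (rule derivative_eq_intros refl d_qm)+
    using cqm_pos[OF n, of x] d_qm[of n x S] by (auto simp: field_simps)
  have d: "((\<lambda>s. FF n s) has_real_derivative
     8*cW n*(cNd n x*cQ n x - 2*cG n x*cQd n x)/cQ n x^3 + 6*n*(n+1)*(n-1)^3*(cqpd n x / cqp n x - cqmd n x / cqm n x)) (at x within S)"
    unfolding FF_def
    by (intro DERIV_add d1 DERIV_cmult DERIV_diff d2 d3)
  have e: "8*cW n*(cNd n x*cQ n x - 2*cG n x*cQd n x)/cQ n x^3 + 6*n*(n+1)*(n-1)^3*(cqpd n x / cqp n x - cqmd n x / cqm n x)
     = cR (cA n) (cB n) (cz n x)"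
    unfolding cR_def
    apply (rule final_alg[OF qpqm[symmetric]])
    using cqp_pos[OF n, of x] cqm_pos[OF n, of x] cW_pos[OF n] one_minus_cz[OF n] polyid qlog
    by (auto simp: cW_def)
  show ?thesis using d unfolding e .
qed



lemma term_int:
  fixes a b y :: real
  shows "((\<lambda>s. (a*real k + b)*(4*real k+1)*(y*((1-s^2)/4)^2)^k) has_integral
          ((a*real k+b)*y^k / real ((4*k) choose (2*k)))) {0..1}"
proof -
  let ?c = "(a*real k + b)*(4*real k+1)*y^k/16^k"
  have B: "((\<lambda>s. ?c * (1-s^2)^(2*k)) has_integral (?c * (4^(2*k) * fact (2*k) ^2 / fact (2*(2*k)+1)))) {0..1}"
    by (rule has_integral_mult_right[OF beta_int])
  have e1: "\<And>s::real. ?c * (1-s^2)^(2*k) = (a*real k + b)*(4*real k+1)*(y*((1-s^2)/4)^2)^k"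
    by (simp add: power_mult_distrib power_divide power_mult[symmetric] mult.commute)
  have ch: "real ((4*k) choose (2*k)) = fact (4*k) / (fact (2*k) * fact (2*k))"
    using binomial_fact[of "2*k" "4*k", where 'a=real] by simp
  have f: "(fact (2*(2*k)+1) :: real) = (4*real k+1) * fact (4*k)"
    by (simp add: algebra_simps)
  have g: "\<And>(C::real) u P F2 F4. u \<noteq> 0 \<Longrightarrow> P \<noteq> 0 \<Longrightarrow> F2 \<noteq> 0 \<Longrightarrow> F4 \<noteq> 0 \<Longrightarrow>
     (C*u/P) * (P * F2^2 / (u*F4)) = C / (F4/(F2*F2))"
    by (simp add: field_simps power2_eq_square)
  have p: "(4::real)^(2*k) = 16^k" by (simp add: power_mult)
  have e2: "?c * (4^(2*k) * fact (2*k) ^2 / fact (2*(2*k)+1)) = (a*real k+b)*y^k / real ((4*k) choose (2*k))"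
    unfolding ch f p
    using g[of "4*real k+1" "16^k" "fact (2*k)" "fact (4*k)" "(a*real k + b)*y^k"]
    by (simp add: mult.assoc)
  show ?thesis using B unfolding e1 e2 .
qed


lemma FF_int: assumes n: "n > 0"
  shows "((\<lambda>s. cR (cA n) (cB n) (cz n s)) has_integral (FF n 1 - FF n 0)) {0..1}"
  apply (rule fundamental_theorem_of_calculus)
   apply simp
  apply (subst has_real_derivative_iff_has_vector_derivative[symmetric])
  apply (rule FF_deriv[OF n])
  done

lemma FF_vals: assumes n: "n > 1"
  shows "FF n 1 - FF n 0 = 6*n*(n+1)*(n-1)^3*ln n - 32*n*(n+1)^2*(n^2-4*n+1)"
proof -
  have W: "cW n > 0" using n by (intro cW_pos) simp
  have z: "FF n 0 = 0" unfolding FF_def cG_def cqp_def cqm_def by simp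
  have q1: "cQ n 1 = 16*cW n" unfolding cQ_def by simp
  have g1: "cG n 1 = -1024*cW n^2*(n^2-4*n+1)"
  proof -
    have "cG n 1 = c0 n + c1 n + c2 n + c3 n" by (simp add: cG_def cN_def)
    also have "\<dots> = -1024*cW n^2*(n^2-4*n+1)" unfolding cW_def c0_def c1_def c2_def c3_def by algebra
    finally show ?thesis .
  qed
  have p1: "cqp n 1 = 4*(n+1)*n" unfolding cqp_def by (simp add: algebra_simps power2_eq_square)
  have m1: "cqm n 1 = 4*(n+1)" unfolding cqm_def by (simp add: algebra_simps power2_eq_square)
  have l: "ln (cqp n 1) - ln (cqm n 1) = ln n"
    unfolding p1 m1 using n by (simp add: ln_mult)
  have r: "8*cW n*cG n 1/(cQ n 1)^2 = -32*cW n*(n^2-4*n+1)"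
    unfolding q1 g1 using W by (simp add: field_simps power2_eq_square)
  show ?thesis unfolding z unfolding FF_def unfolding r l unfolding cW_def by simp
qed

lemma general:
  assumes n: "n > 1" and bnd: "(n-1)^4 < 16*n*(n+1)^2"
  shows "(\<lambda>k. (cA n*real k + cB n) * cy n^k / real ((4*k) choose (2*k))) sums
           (6*n*(n+1)*(n-1)^3*ln n - 32*n*(n+1)^2*(n^2-4*n+1))"
proof -
  define g where "g = (\<lambda>k s. (cA n*real k + cB n)*(4*real k+1)*(cz n s)^k)"
  define r where "r = \<bar>cy n\<bar>/16"
  have acy: "\<bar>cy n\<bar> = (n-1)^4/(n*(n+1)^2)" unfolding cy_def using n by (simp add: abs_divide abs_mult)
  have r1: "r < 1"
  proof -
    have "(n-1)^4/(n*(n+1)^2) < 16" using bnd n by (simp add: divide_less_eq mult.assoc)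
    moreover have "\<And>X::real. X < 16 \<Longrightarrow> X/16 < 1" by simp
    ultimately show ?thesis unfolding r_def acy by blast
  qed
  have r0: "0 \<le> r" unfolding r_def by simp
  have zb: "\<bar>cz n s\<bar> \<le> r" if s: "s \<in> {0..1}" for s
  proof -
    have "0 \<le> 1 - s^2" "1 - s^2 \<le> 1" using s by (auto simp: power_le_one)
    hence "((1-s^2)/4)^2 \<le> 1/16" by (simp add: power_divide power_le_one)
    hence "\<bar>cy n\<bar> * ((1-s^2)/4)^2 \<le> \<bar>cy n\<bar> * (1/16)" by (intro mult_left_mono) auto
    thus ?thesis unfolding cz_def r_def by (simp add: abs_mult)
  qed
  have M: "summable (\<lambda>k. (\<bar>cA n\<bar>*real k + \<bar>cB n\<bar>)*(4*real k+1)*r^k)"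
    using poly_geo_sums[of r "\<bar>cA n\<bar>" "\<bar>cB n\<bar>"] r1 r0 by (auto simp: sums_iff)
  have bound: "norm (g k s) \<le> (\<bar>cA n\<bar>*real k + \<bar>cB n\<bar>)*(4*real k+1)*r^k" if s: "s \<in> {0..1}" for k s
  proof -
    have "norm (g k s) = \<bar>cA n*real k + cB n\<bar>*(4*real k+1)*\<bar>cz n s\<bar>^k"
      unfolding g_def by (simp add: abs_mult power_abs)
    also have "\<dots> \<le> (\<bar>cA n\<bar>*real k + \<bar>cB n\<bar>)*(4*real k+1)*r^k"
    proof (intro mult_mono power_mono zb[OF s])
      show "\<bar>cA n*real k + cB n\<bar> \<le> \<bar>cA n\<bar>*real k + \<bar>cB n\<bar>"
        using abs_triangle_ineq[of "cA n*real k" "cB n"] by (simp add: abs_mult)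
    qed auto
    finally show ?thesis .
  qed
  have U: "uniform_limit {0..1} (\<lambda>N s. \<Sum>k<N. g k s) (\<lambda>s. \<Sum>k. g k s) sequentially"
    by (rule Weierstrass_m_test[OF bound M]) auto
  have C: "continuous_on {0..1} (\<lambda>s. \<Sum>k<N. g k s)" for N
    unfolding g_def cz_def by (intro continuous_intros) auto
  obtain I J where I: "\<And>N. ((\<lambda>s. \<Sum>k<N. g k s) has_integral I N) {0..1}"
    and J: "((\<lambda>s. \<Sum>k. g k s) has_integral J) {0..1}" and IJ: "I \<longlonglongrightarrow> J"
    using uniform_limit_integral[OF U C] by auto
  have gk: "(g k has_integral ((cA n*real k + cB n) * cy n^k / real ((4*k) choose (2*k)))) {0..1}" for k
    unfolding g_def cz_def by (rule term_int)
  have Ik: "I N = (\<Sum>k<N. (cA n*real k + cB n) * cy n^k / real ((4*k) choose (2*k)))" for N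
  proof -
    have "((\<lambda>s. \<Sum>k<N. g k s) has_integral (\<Sum>k<N. (cA n*real k + cB n) * cy n^k / real ((4*k) choose (2*k)))) {0..1}"
      by (rule has_integral_sum) (auto intro: gk)
    thus ?thesis using I[of N] by (rule has_integral_unique[symmetric])
  qed
  have pt: "(\<Sum>k. g k s) = cR (cA n) (cB n) (cz n s)" if s: "s \<in> {0..1}" for s
  proof -
    have "norm (cz n s) < 1" using zb[OF s] r1 by simp
    from poly_geo_sums[OF this, of "cA n" "cB n"] show ?thesis
      unfolding g_def cR_def by (rule sums_unique[symmetric])
  qed
  have J2: "((\<lambda>s. \<Sum>k. g k s) has_integral (FF n 1 - FF n 0)) {0..1}"
    using FF_int[of n] n by (subst has_integral_cong[OF pt]) auto
  have Jv: "J = FF n 1 - FF n 0" using has_integral_unique[OF J J2] .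
  show ?thesis unfolding sums_def using IJ unfolding Ik Jv FF_vals[OF n] .
qed


lemma bound_lemma:
  fixes n :: real
  assumes n1: "1 < n" and n2: "n < (sqrt ((1 + sqrt 2) / 2) + 1) / (sqrt ((1 + sqrt 2) / 2) - 1)"
  shows "(n-1)^4 < 16*n*(n+1)^2"
proof -
  define u0 where "u0 = (1 + sqrt 2)/2"
  define \<sigma> where "\<sigma> = sqrt u0"
  have s2: "sqrt 2 ^ 2 = 2" by simp
  have sq2: "sqrt 2 > 1" by simp
  have u0g: "u0 > 1" unfolding u0_def using sq2 by simp
  have sig2: "\<sigma>^2 = u0" unfolding \<sigma>_def using u0g by simp
  have sig1: "\<sigma> > 1" unfolding \<sigma>_def using u0g by simp
  have "n < (\<sigma>+1)/(\<sigma>-1)" using n2 unfolding \<sigma>_def u0_def .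
  hence "n*(\<sigma>-1) < \<sigma>+1" using sig1 by (simp add: less_divide_eq)
  hence "\<sigma>*(n-1) < n+1" by (simp add: algebra_simps)
  hence t: "\<sigma> < (n+1)/(n-1)" using n1 by (simp add: less_divide_eq)
  define u where "u = ((n+1)/(n-1))^2"
  have "\<sigma>^2 < u" unfolding u_def using t sig1 by (intro power_strict_mono) auto
  hence uu: "u > u0" using sig2 by simp
  have f: "4*u^2 - 4*u - 1 = 4*(u-u0)*(u - (1 - sqrt 2)/2)"
    unfolding u0_def by (simp add: algebra_simps power2_eq_square field_simps s2)
  have neg: "(1 - sqrt 2)/2 < 0" using sq2 by simp
  have a1: "u - u0 > 0" using uu by simp
  have a2: "u - (1 - sqrt 2)/2 > 0" using neg uu u0g by linarith
  have "4*(u-u0)*(u - (1 - sqrt 2)/2) > 0" using a1 a2 by simp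
  hence pos: "4*u^2 - 4*u - 1 > 0" using f by simp
  have d: "n - 1 > 0" using n1 by simp
  have ud: "u*(n-1)^2 = (n+1)^2" unfolding u_def using d by (simp add: power_divide)
  have "(n-1)^4*(4*u^2 - 4*u - 1) = 4*(u*(n-1)^2)^2 - 4*(u*(n-1)^2)*(n-1)^2 - (n-1)^4"
    by algebra
  also have "\<dots> = 16*n*(n+1)^2 - (n-1)^4" unfolding ud by algebra
  finally have "16*n*(n+1)^2 - (n-1)^4 = (n-1)^4*(4*u^2 - 4*u - 1)" by simp
  thus ?thesis using pos d by (smt (verit) mult_pos_pos zero_less_power)
qed

lemma special_plus:
  fixes n a b u v c r :: real
  assumes n: "n > 1" and bnd: "(n-1)^4 < 16*n*(n+1)^2" and ha: "a = c*cA n" and hb: "b = c*cB n"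
    and huv: "u/v = cy n" and hr: "r = c*(6*n*(n+1)*(n-1)^3*ln n - 32*n*(n+1)^2*(n^2-4*n+1))"
  shows "(\<lambda>k. (a*real k + b)*u^k/(v^k*real ((4*k) choose (2*k)))) sums r"
proof -
  have "(\<lambda>k. c * ((cA n*real k + cB n) * cy n^k / real ((4*k) choose (2*k)))) sums r"
    unfolding hr by (rule sums_mult[OF general[OF n bnd]])
  moreover have "c * ((cA n*real k + cB n) * cy n^k / real ((4*k) choose (2*k)))
      = (a*real k + b)*u^k/(v^k*real ((4*k) choose (2*k)))" for k
  proof -
    have "c * ((cA n*real k + cB n) * cy n^k / real ((4*k) choose (2*k)))
        = (c * ((cA n*real k + cB n) * u^k)) / (v^k * real ((4*k) choose (2*k)))"
      unfolding huv[symmetric] power_divide by simp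
    also have "c * ((cA n*real k + cB n) * u^k) = (a*real k + b)*u^k"
      unfolding ha hb by (simp add: algebra_simps)
    finally show ?thesis .
  qed
  ultimately show ?thesis by simp
qed

lemma special_minus:
  fixes n a b u v c r :: real
  assumes n: "n > 1" and bnd: "(n-1)^4 < 16*n*(n+1)^2" and ha: "a = c*cA n" and hb: "- b = c*cB n"
    and huv: "u/v = cy n" and hr: "r = c*(6*n*(n+1)*(n-1)^3*ln n - 32*n*(n+1)^2*(n^2-4*n+1))"
  shows "(\<lambda>k. (a*real k - b)*u^k/(v^k*real ((4*k) choose (2*k)))) sums r"
  using special_plus[OF n bnd ha hb huv hr] by simp

lemma special_minus1:
  fixes n a b v c r :: real
  assumes n: "n > 1" and bnd: "(n-1)^4 < 16*n*(n+1)^2" and ha: "a = c*cA n" and hb: "- b = c*cB n"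
    and huv: "1/v = cy n" and hr: "r = c*(6*n*(n+1)*(n-1)^3*ln n - 32*n*(n+1)^2*(n^2-4*n+1))"
  shows "(\<lambda>k. (a*real k - b)/(v^k*real ((4*k) choose (2*k)))) sums r"
  using special_minus[OF n bnd ha hb huv hr] by simp

lemma first_part:
  "\<forall>n::real. 1 < n \<and>
       n < (sqrt ((1 + sqrt 2) / 2) + 1) / (sqrt ((1 + sqrt 2) / 2) - 1) \<longrightarrow>
       (\<lambda>k::nat. (2 * (n^2 + 6*n + 1)^2 * (n^2 - 10*n + 1) * real k
            + (n^6 - 58*n^5 + 159*n^4 + 52*n^3 + 159*n^2 - 58*n + 1)) * (n - 1) ^ (4*k)
          / ((- n) ^ k * (n + 1) ^ (2*k) * real ((4 * k) choose (2 * k))))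
       sums (6 * n * (n + 1) * (n - 1)^3 * ln n - 32 * n * (n + 1)^2 * (n^2 - 4*n + 1))"
proof (intro allI impI)
  fix n :: real
  assume h: "1 < n \<and> n < (sqrt ((1 + sqrt 2) / 2) + 1) / (sqrt ((1 + sqrt 2) / 2) - 1)"
  hence n: "n > 1" and bnd: "(n-1)^4 < 16*n*(n+1)^2" using bound_lemma by auto
  have e: "(cA n*real k + cB n) * cy n^k / real ((4*k) choose (2*k)) =
     (2 * (n^2 + 6*n + 1)^2 * (n^2 - 10*n + 1) * real k
            + (n^6 - 58*n^5 + 159*n^4 + 52*n^3 + 159*n^2 - 58*n + 1)) * (n - 1) ^ (4*k)
          / ((- n) ^ k * (n + 1) ^ (2*k) * real ((4 * k) choose (2 * k)))" for k
  proof -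
    have cyk: "cy n ^ k = (n-1)^(4*k)/((-n)^k*(n+1)^(2*k))"
      unfolding cy_def power_divide power_mult_distrib power_mult ..
    show ?thesis unfolding cyk cA_def cB_def by simp
  qed
  show "(\<lambda>k::nat. (2 * (n^2 + 6*n + 1)^2 * (n^2 - 10*n + 1) * real k
            + (n^6 - 58*n^5 + 159*n^4 + 52*n^3 + 159*n^2 - 58*n + 1)) * (n - 1) ^ (4*k)
          / ((- n) ^ k * (n + 1) ^ (2*k) * real ((4 * k) choose (2 * k))))
       sums (6 * n * (n + 1) * (n - 1)^3 * ln n - 32 * n * (n + 1)^2 * (n^2 - 4*n + 1))"
    using general[OF n bnd] unfolding e .
qed

lemma sp0: "(\<lambda>k::nat. (2890 * real k - 563) / ((- 18) ^ k * real ((4 * k) choose (2 * k)))) sums (-12 * (ln 2 + 48))"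
  by (rule special_minus1[where n="2" and c="-1/3"]) (simp_all add: cA_def cB_def cy_def power_divide algebra_simps)

lemma sp1: "(\<lambda>k::nat. (245 * real k - 17) / ((- 3) ^ k * real ((4 * k) choose (2 * k)))) sums (-24 - 9/2 * ln 3)"
  by (rule special_minus1[where n="3" and c="-1/128"]) (simp_all add: cA_def cB_def cy_def power_divide algebra_simps)

lemma sp2: "(\<lambda>k::nat. (77326 * real k + 8951) * 81 ^ k / ((- 100) ^ k * real ((4 * k) choose (2 * k)))) sums (40 * (80 - 81 * ln 4))"
  by (rule special_plus[where n="4" and c="-1"]) (simp_all add: cA_def cB_def cy_def power_divide algebra_simps)

lemma sp3: "(\<lambda>k::nat. (196 * real k + 73) * 64 ^ k / ((- 45) ^ k * real ((4 * k) choose (2 * k)))) sums (15 * (3 - ln 5))"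
  by (rule special_plus[where n="5" and c="-1/768"]) (simp_all add: cA_def cB_def cy_def power_divide algebra_simps)

lemma sp4: "(\<lambda>k::nat. (245134 * real k + 181679) * 625 ^ k / ((- 294) ^ k * real ((4 * k) choose (2 * k)))) sums (84 * (1456 - 375 * ln 6))"
  by (rule special_plus[where n="6" and c="-1"]) (simp_all add: cA_def cB_def cy_def power_divide algebra_simps)

lemma sp5: "(\<lambda>k::nat. (2645 * real k + 3517) * 81 ^ k / ((- 28) ^ k * real ((4 * k) choose (2 * k)))) sums (7 * (352 - 81 * ln 7))"
  by (rule special_plus[where n="7" and c="-1/128"]) (simp_all add: cA_def cB_def cy_def power_divide algebra_simps)

lemma sp6: "(\<lambda>k::nat. (127690 * real k + 316933) * 2401 ^ k / ((- 648) ^ k * real ((4 * k) choose (2 * k)))) sums (144 * (1584 - 343 * ln 8))"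
  by (rule special_plus[where n="8" and c="-1/3"]) (simp_all add: cA_def cB_def cy_def power_divide algebra_simps)

lemma sp7: "(\<lambda>k::nat. (1156 * real k + 7031) * 1024 ^ k / ((- 225) ^ k * real ((4 * k) choose (2 * k)))) sums (45 * (115 - 24 * ln 9))"
  by (rule special_plus[where n="9" and c="-1/256"]) (simp_all add: cA_def cB_def cy_def power_divide algebra_simps)

lemma sp8: "(\<lambda>k::nat. (51842 * real k - 3142679) * 6561 ^ k / ((- 1210) ^ k * real ((4 * k) choose (2 * k)))) sums (220 * (2187 * ln 10 - 10736))"
  by (rule special_minus[where n="10" and c="1"]) (simp_all add: cA_def cB_def cy_def power_divide algebra_simps)

lemma sp9: "(\<lambda>k::nat. (2209 * real k - 13421) * 625 ^ k / ((- 99) ^ k * real ((4 * k) choose (2 * k)))) sums (33/2 * (125 * ln 11 - 624))"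
  by (rule special_minus[where n="11" and c="1/384"]) (simp_all add: cA_def cB_def cy_def power_divide algebra_simps)

lemma sp10: "(\<lambda>k::nat. (2354450 * real k - 8037191) * 14641 ^ k / ((- 2028) ^ k * real ((4 * k) choose (2 * k)))) sums (312 * (3993 * ln 12 - 20176))"
  by (rule special_minus[where n="12" and c="1"]) (simp_all add: cA_def cB_def cy_def power_divide algebra_simps)

lemma sp11: "(\<lambda>k::nat. (19220 * real k - 46979) * 5184 ^ k / ((- 637) ^ k * real ((4 * k) choose (2 * k)))) sums (91 * (81 * ln 13 - 413))"
  by (rule special_minus[where n="13" and c="1/256"]) (simp_all add: cA_def cB_def cy_def power_divide algebra_simps)

lemma sp12: "(\<lambda>k::nat. (3000518 * real k - 5794357) * 28561 ^ k / ((- 3150) ^ k * real ((4 * k) choose (2 * k)))) sums (420 * (2197 * ln 14 - 11280))"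
  by (rule special_minus[where n="14" and c="1/3"]) (simp_all add: cA_def cB_def cy_def power_divide algebra_simps)

lemma sp13: "(\<lambda>k::nat. (118579 * real k - 190573) * 2401 ^ k / ((- 240) ^ k * real ((4 * k) choose (2 * k)))) sums (30 * (1029 * ln 15 - 5312))"
  by (rule special_minus[where n="15" and c="1/128"]) (simp_all add: cA_def cB_def cy_def power_divide algebra_simps)

lemma sp14: "(\<lambda>k::nat. (24174146 * real k - 33367199) * 50625 ^ k / ((- 4624) ^ k * real ((4 * k) choose (2 * k)))) sums (544 * (10125 * ln 16 - 52496))"
  by (rule special_minus[where n="16" and c="1"]) (simp_all add: cA_def cB_def cy_def power_divide algebra_simps)

lemma sp15: "(\<lambda>k::nat. (48020 * real k - 58117) * 16384 ^ k / ((- 1377) ^ k * real ((4 * k) choose (2 * k)))) sums (153 * (64 * ln 17 - 333))"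
  by (rule special_minus[where n="17" and c="1/768"]) (simp_all add: cA_def cB_def cy_def power_divide algebra_simps)

lemma sp16: "(\<lambda>k::nat. (54371810 * real k - 58537799) * 83521 ^ k / ((- 6498) ^ k * real ((4 * k) choose (2 * k)))) sums (684 * (14739 * ln 18 - 76912))"
  by (rule special_minus[where n="18" and c="1"]) (simp_all add: cA_def cB_def cy_def power_divide algebra_simps)

lemma sp17: "(\<lambda>k::nat. (608923 * real k - 589327) * 6561 ^ k / ((- 475) ^ k * real ((4 * k) choose (2 * k)))) sums (95/2 * (2187 * ln 19 - 11440))"
  by (rule special_minus[where n="19" and c="1/128"]) (simp_all add: cA_def cB_def cy_def power_divide algebra_simps)

lemma sp18: "(\<lambda>k::nat. (36373094 * real k - 31893853) * 130321 ^ k / ((- 8820) ^ k * real ((4 * k) choose (2 * k)))) sums (840 * (6859 * ln 20 - 35952))"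
  by (rule special_minus[where n="20" and c="1/3"]) (simp_all add: cA_def cB_def cy_def power_divide algebra_simps)

lemma sp19: "(\<lambda>k::nat. (584756 * real k - 467339) * 40000 ^ k / ((- 2541) ^ k * real ((4 * k) choose (2 * k)))) sums (231 * (375 * ln 21 - 1969))"
  by (rule special_minus[where n="21" and c="1/256"]) (simp_all add: cA_def cB_def cy_def power_divide algebra_simps)

lemma sp20: "(\<lambda>k::nat. (661704134402 * real k - 517115569199) * 43046721 ^ k / ((- 2693140) ^ k * real ((4 * k) choose (2 * k)))) sums (60520 * (1594323 * ln (85/4) - 8374544))"
  by (rule special_minus[where n="85/4" and c="4096"]) (simp_all add: cA_def cB_def cy_def power_divide algebra_simps)

theorem corollary1p3:
  shows
    "(\<forall>n::real. 1 < n \<and>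
       n < (sqrt ((1 + sqrt 2) / 2) + 1) / (sqrt ((1 + sqrt 2) / 2) - 1) \<longrightarrow>
       (\<lambda>k::nat. (2 * (n^2 + 6*n + 1)^2 * (n^2 - 10*n + 1) * real k
            + (n^6 - 58*n^5 + 159*n^4 + 52*n^3 + 159*n^2 - 58*n + 1)) * (n - 1) ^ (4*k)
          / ((- n) ^ k * (n + 1) ^ (2*k) * real ((4 * k) choose (2 * k))))
       sums (6 * n * (n + 1) * (n - 1)^3 * ln n - 32 * n * (n + 1)^2 * (n^2 - 4*n + 1)))
  \<and> (\<lambda>k::nat. (2890 * real k - 563) / ((- 18) ^ k * real ((4 * k) choose (2 * k))))
       sums (-12 * (ln 2 + 48))
  \<and> (\<lambda>k::nat. (245 * real k - 17) / ((- 3) ^ k * real ((4 * k) choose (2 * k))))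
       sums (-24 - 9/2 * ln 3)
  \<and> (\<lambda>k::nat. (77326 * real k + 8951) * 81 ^ k / ((- 100) ^ k * real ((4 * k) choose (2 * k))))
       sums (40 * (80 - 81 * ln 4))
  \<and> (\<lambda>k::nat. (196 * real k + 73) * 64 ^ k / ((- 45) ^ k * real ((4 * k) choose (2 * k))))
       sums (15 * (3 - ln 5))
  \<and> (\<lambda>k::nat. (245134 * real k + 181679) * 625 ^ k / ((- 294) ^ k * real ((4 * k) choose (2 * k))))
       sums (84 * (1456 - 375 * ln 6))
  \<and> (\<lambda>k::nat. (2645 * real k + 3517) * 81 ^ k / ((- 28) ^ k * real ((4 * k) choose (2 * k))))
       sums (7 * (352 - 81 * ln 7))
  \<and> (\<lambda>k::nat. (127690 * real k + 316933) * 2401 ^ k / ((- 648) ^ k * real ((4 * k) choose (2 * k))))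
       sums (144 * (1584 - 343 * ln 8))
  \<and> (\<lambda>k::nat. (1156 * real k + 7031) * 1024 ^ k / ((- 225) ^ k * real ((4 * k) choose (2 * k))))
       sums (45 * (115 - 24 * ln 9))
  \<and> (\<lambda>k::nat. (51842 * real k - 3142679) * 6561 ^ k / ((- 1210) ^ k * real ((4 * k) choose (2 * k))))
       sums (220 * (2187 * ln 10 - 10736))
  \<and> (\<lambda>k::nat. (2209 * real k - 13421) * 625 ^ k / ((- 99) ^ k * real ((4 * k) choose (2 * k))))
       sums (33/2 * (125 * ln 11 - 624))
  \<and> (\<lambda>k::nat. (2354450 * real k - 8037191) * 14641 ^ k / ((- 2028) ^ k * real ((4 * k) choose (2 * k))))
       sums (312 * (3993 * ln 12 - 20176))
  \<and> (\<lambda>k::nat. (19220 * real k - 46979) * 5184 ^ k / ((- 637) ^ k * real ((4 * k) choose (2 * k))))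
       sums (91 * (81 * ln 13 - 413))
  \<and> (\<lambda>k::nat. (3000518 * real k - 5794357) * 28561 ^ k / ((- 3150) ^ k * real ((4 * k) choose (2 * k))))
       sums (420 * (2197 * ln 14 - 11280))
  \<and> (\<lambda>k::nat. (118579 * real k - 190573) * 2401 ^ k / ((- 240) ^ k * real ((4 * k) choose (2 * k))))
       sums (30 * (1029 * ln 15 - 5312))
  \<and> (\<lambda>k::nat. (24174146 * real k - 33367199) * 50625 ^ k / ((- 4624) ^ k * real ((4 * k) choose (2 * k))))
       sums (544 * (10125 * ln 16 - 52496))
  \<and> (\<lambda>k::nat. (48020 * real k - 58117) * 16384 ^ k / ((- 1377) ^ k * real ((4 * k) choose (2 * k))))
       sums (153 * (64 * ln 17 - 333))
  \<and> (\<lambda>k::nat. (54371810 * real k - 58537799) * 83521 ^ k / ((- 6498) ^ k * real ((4 * k) choose (2 * k))))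
       sums (684 * (14739 * ln 18 - 76912))
  \<and> (\<lambda>k::nat. (608923 * real k - 589327) * 6561 ^ k / ((- 475) ^ k * real ((4 * k) choose (2 * k))))
       sums (95/2 * (2187 * ln 19 - 11440))
  \<and> (\<lambda>k::nat. (36373094 * real k - 31893853) * 130321 ^ k / ((- 8820) ^ k * real ((4 * k) choose (2 * k))))
       sums (840 * (6859 * ln 20 - 35952))
  \<and> (\<lambda>k::nat. (584756 * real k - 467339) * 40000 ^ k / ((- 2541) ^ k * real ((4 * k) choose (2 * k))))
       sums (231 * (375 * ln 21 - 1969))
  \<and> (\<lambda>k::nat. (661704134402 * real k - 517115569199) * 43046721 ^ k / ((- 2693140) ^ k * real ((4 * k) choose (2 * k))))
       sums (60520 * (1594323 * ln (85/4) - 8374544))"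
  using first_part sp0 sp1 sp2 sp3 sp4 sp5 sp6 sp7 sp8 sp9 sp10 sp11 sp12 sp13 sp14 sp15 sp16 sp17 sp18 sp19 sp20 by blast


end
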